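(* Let $X$ be a topological space, $Y$ a compact metric space, $A$ a finite subset of $Y$ and $\epsilon>0$. Let $Z$ denote either $U_\epsilon(Y)$ or $\mathcal{U}_\epsilon(A)$. If $f,g:X\to Z$ are continuous and the map $f\cup g:X\to Z$, $(f\cup g)(x)=f(x)\cup g(x)$, is well-defined (i.e. $f(x)\cup g(x)\in Z$ for all $x$), then $f\cup g$ is continuous and homotopic to both $f$ and $g$.
   Context: For a compact metric space $Y$, $2^Y$ is the set of nonempty closed subsets of $Y$ with the upper semifinite topology, whose base consists of the sets $B(U)=\{C\in 2^Y\mid C\subset U\}$ for $U\subseteq Y$ open. $U_\epsilon(Y)=\{C\in 2^Y\mid \mathrm{diam}(C)<\epsilon\}$ with the subspace topology. For finite $A\subset Y$, $\mathcal{U}_\epsilon(A)=\{C\subseteq A\mid C\neq\emptyset,\ \mathrm{diam}(C)<\epsilon\}$, a finite poset under inclusion regarded as a finite $T_0$ space whose open sets are the down-sets. *)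

theory Defs
  imports "HOL-Analysis.Analysis"
begin

definition mdiam :: "('b \<Rightarrow> 'b \<Rightarrow> real) \<Rightarrow> 'b set \<Rightarrow> real" where
  "mdiam d C = (SUP p\<in>C \<times> C. d (fst p) (snd p))"

text \<open>The hyperspace 2^Y of nonempty closed subsets of the metric space (M,d), with the
  upper semifinite topology generated by the base B(U) = {C. C subset U}, U open.\<close>
definition hyper_top :: "'b set \<Rightarrow> ('b \<Rightarrow> 'b \<Rightarrow> real) \<Rightarrow> 'b set topology" where
  "hyper_top M d = topology_generated_by
     {{C. closedin (Metric_space.mtopology M d) C \<and> C \<noteq> {} \<and> C \<subseteq> U} | U.
        openin (Metric_space.mtopology M d) U}"

definition Ueps_top :: "'b set \<Rightarrow> ('b \<Rightarrow> 'b \<Rightarrow> real) \<Rightarrow> real \<Rightarrow> 'b set topology" where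
  "Ueps_top M d \<epsilon> = subtopology (hyper_top M d) {C. mdiam d C < \<epsilon>}"

definition Ufin :: "('b \<Rightarrow> 'b \<Rightarrow> real) \<Rightarrow> 'b set \<Rightarrow> real \<Rightarrow> 'b set set" where
  "Ufin d A \<epsilon> = {C. C \<subseteq> A \<and> C \<noteq> {} \<and> mdiam d C < \<epsilon>}"

text \<open>Finite T0 space: open sets are the down-sets of the poset (under inclusion).\<close>
definition Ufin_top :: "('b \<Rightarrow> 'b \<Rightarrow> real) \<Rightarrow> 'b set \<Rightarrow> real \<Rightarrow> 'b set topology" where
  "Ufin_top d A \<epsilon> = topology (\<lambda>S. S \<subseteq> Ufin d A \<epsilon> \<and>
      (\<forall>C\<in>S. \<forall>D\<in>Ufin d A \<epsilon>. D \<subseteq> C \<longrightarrow> D \<in> S))"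

lemma istopology_downsets:
  "istopology (\<lambda>S. S \<subseteq> P \<and> (\<forall>C\<in>S. \<forall>D\<in>P. D \<subseteq> C \<longrightarrow> D \<in> S))"
  unfolding istopology_def by blast

lemma openin_Ufin_top:
  "openin (Ufin_top d A \<epsilon>) S \<longleftrightarrow>
     S \<subseteq> Ufin d A \<epsilon> \<and> (\<forall>C\<in>S. \<forall>D\<in>Ufin d A \<epsilon>. D \<subseteq> C \<longrightarrow> D \<in> S)"
  unfolding Ufin_top_def by (simp add: topology_inverse'[OF istopology_downsets])

lemma topspace_Ufin_top: "topspace (Ufin_top d A \<epsilon>) = Ufin d A \<epsilon>"
  unfolding topspace_def openin_Ufin_top by blast

end

theory Submission
  imports Defs
begin

definition goodZ :: "'b set topology \<Rightarrow> bool" where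
  "goodZ Z \<longleftrightarrow> (\<forall>W C. openin Z W \<and> C \<in> W \<longrightarrow> (\<exists>V. openin Z V \<and> C \<in> V \<and> V \<subseteq> W \<and>
     (\<forall>D\<in>topspace Z. \<forall>E\<in>topspace Z. D \<union> E \<in> topspace Z \<longrightarrow> (D \<union> E \<in> V \<longleftrightarrow> D \<in> V \<and> E \<in> V))))"

lemma goodZ_down:
  assumes "goodZ Z" "openin Z W" "C \<in> W" "D \<in> topspace Z" "D \<subseteq> C"
  shows "D \<in> W"
proof -
  have CZ: "C \<in> topspace Z" using assms(2,3) openin_subset by blast
  obtain V where V: "openin Z V" "C \<in> V" "V \<subseteq> W"
    "\<forall>D\<in>topspace Z. \<forall>E\<in>topspace Z. D \<union> E \<in> topspace Z \<longrightarrow> (D \<union> E \<in> V \<longleftrightarrow> D \<in> V \<and> E \<in> V)"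
    using assms(1)[unfolded goodZ_def, rule_format, OF conjI[OF assms(2,3)]] by (elim exE conjE)
  have "D \<union> C = C" using assms(5) by blast
  then have "D \<in> V" using V(2,4) CZ assms(4) by metis
  then show ?thesis using V(3) by blast
qed

lemma goodZ_union_cont:
  assumes "goodZ Z" "continuous_map X Z f" "continuous_map X Z g"
    "\<forall>x\<in>topspace X. f x \<union> g x \<in> topspace Z"
  shows "continuous_map X Z (\<lambda>x. f x \<union> g x)"
  unfolding continuous_map_def
proof (intro conjI allI impI)
  show "(\<lambda>x. f x \<union> g x) \<in> topspace X \<rightarrow> topspace Z" using assms(4) by blast
  fix W assume W: "openin Z W"
  show "openin X {x \<in> topspace X. f x \<union> g x \<in> W}"
  proof (subst openin_subopen, intro ballI)
    fix x assume x: "x \<in> {x \<in> topspace X. f x \<union> g x \<in> W}"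
    obtain V where V: "openin Z V" "f x \<union> g x \<in> V" "V \<subseteq> W"
      "\<forall>D\<in>topspace Z. \<forall>E\<in>topspace Z. D \<union> E \<in> topspace Z \<longrightarrow> (D \<union> E \<in> V \<longleftrightarrow> D \<in> V \<and> E \<in> V)"
      using assms(1)[unfolded goodZ_def, rule_format, OF conjI[OF W], of "f x \<union> g x"] x by blast
    have fz: "\<And>y. y \<in> topspace X \<Longrightarrow> f y \<in> topspace Z" "\<And>y. y \<in> topspace X \<Longrightarrow> g y \<in> topspace Z"
      using continuous_map_image_subset_topspace[OF assms(2)] continuous_map_image_subset_topspace[OF assms(3)] by blast+
    let ?T = "{y \<in> topspace X. f y \<in> V} \<inter> {y \<in> topspace X. g y \<in> V}"
    have "openin X ?T" by (intro openin_Int openin_continuous_map_preimage[OF assms(2) V(1)] openin_continuous_map_preimage[OF assms(3) V(1)])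
    moreover have "x \<in> ?T" using V x fz assms(4) by auto
    moreover have "?T \<subseteq> {x \<in> topspace X. f x \<union> g x \<in> W}" using V fz assms(4) by auto
    ultimately show "\<exists>T. openin X T \<and> x \<in> T \<and> T \<subseteq> {x \<in> topspace X. f x \<union> g x \<in> W}" by blast
  qed
qed

lemma goodZ_homot:
  assumes "goodZ Z" "continuous_map X Z f" "continuous_map X Z g"
    "\<forall>x\<in>topspace X. f x \<union> g x \<in> topspace Z"
  shows "homotopic_with (\<lambda>_. True) X Z (\<lambda>x. f x \<union> g x) f"
proof -
  have uc: "continuous_map X Z (\<lambda>x. f x \<union> g x)" using goodZ_union_cont assms by blast
  define h where "h = (\<lambda>(t::real,x). if t = 0 then f x \<union> g x else f x)"
  have fz: "\<And>y. y \<in> topspace X \<Longrightarrow> f y \<in> topspace Z"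
    using continuous_map_image_subset_topspace[OF assms(2)] by blast
  have "continuous_map (prod_topology (top_of_set {0..1::real}) X) Z h"
    unfolding continuous_map_def
  proof (intro conjI allI impI)
    show "h \<in> topspace (prod_topology (top_of_set {0..1::real}) X) \<rightarrow> topspace Z"
      using fz assms(4) by (auto simp: h_def)
    fix W assume W: "openin Z W"
    define P where "P = {x \<in> topspace X. f x \<union> g x \<in> W}"
    define Q where "Q = {x \<in> topspace X. f x \<in> W}"
    have P: "openin X P" unfolding P_def by (rule openin_continuous_map_preimage[OF uc W])
    have Q: "openin X Q" unfolding Q_def by (rule openin_continuous_map_preimage[OF assms(2) W])
    have PQ: "P \<subseteq> Q" unfolding P_def Q_def using goodZ_down[OF assms(1) W] fz by blast
    have o1: "openin (top_of_set {0..1::real}) {0..1}" by simp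
    have o2: "openin (top_of_set {0..1::real}) ({0..1} \<inter> {0<..})"
      by (rule openin_open_Int) auto
    have "{p \<in> topspace (prod_topology (top_of_set {0..1::real}) X). h p \<in> W}
        = ({0..1} \<times> P) \<union> (({0..1} \<inter> {0<..}) \<times> Q)"
      using PQ by (auto simp: h_def P_def Q_def split: if_splits)
    moreover have "openin (prod_topology (top_of_set {0..1::real}) X) (({0..1} \<times> P) \<union> (({0..1} \<inter> {0<..}) \<times> Q))"
      using o1 o2 P Q by (intro openin_Un openin_prod_Times_iff[THEN iffD2]; simp)
    ultimately show "openin (prod_topology (top_of_set {0..1::real}) X)
        {p \<in> topspace (prod_topology (top_of_set {0..1::real}) X). h p \<in> W}" by simp
  qed
  then show ?thesis unfolding homotopic_with_def by (intro exI[of _ h]) (auto simp: h_def)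
qed

lemma goodZ_sub: "goodZ Z \<Longrightarrow> goodZ (subtopology Z S)"
  unfolding goodZ_def openin_subtopology topspace_subtopology
  apply (intro allI impI)
  subgoal for W C
    apply (elim conjE exE)
    subgoal for T
      apply (drule spec[of _ T], drule spec[of _ C])
      apply (elim conjE exE impE)
       apply blast
      subgoal for V
        apply (rule exI[of _ "V \<inter> S"])
        apply auto
        done
      done
    done
  done

lemma goodZ_Ufin: "goodZ (Ufin_top d A \<epsilon>)"
  unfolding goodZ_def topspace_Ufin_top
proof (intro allI impI)
  fix W C assume a: "openin (Ufin_top d A \<epsilon>) W \<and> C \<in> W"
  let ?V = "{D \<in> Ufin d A \<epsilon>. D \<subseteq> C}"
  have "openin (Ufin_top d A \<epsilon>) ?V" unfolding openin_Ufin_top by auto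
  moreover have "C \<in> ?V" "?V \<subseteq> W" using a unfolding openin_Ufin_top by auto
  ultimately show "\<exists>V. openin (Ufin_top d A \<epsilon>) V \<and> C \<in> V \<and> V \<subseteq> W \<and>
     (\<forall>D\<in>Ufin d A \<epsilon>. \<forall>E\<in>Ufin d A \<epsilon>. D \<union> E \<in> Ufin d A \<epsilon> \<longrightarrow> (D \<union> E \<in> V \<longleftrightarrow> D \<in> V \<and> E \<in> V))"
    by (intro exI[of _ ?V]) auto
qed

lemma goodZ_hyper: "goodZ (hyper_top M d)"
proof -
  let ?T = "Metric_space.mtopology M d"
  let ?B = "\<lambda>U. {C. closedin ?T C \<and> C \<noteq> {} \<and> C \<subseteq> U}"
  let ?S = "{?B U | U. openin ?T U}"
  have key: "\<forall>C\<in>W. \<exists>U. openin ?T U \<and> C \<subseteq> U \<and> ?B U \<subseteq> W" if "generate_topology_on ?S W" for W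
    using that
  proof (induction rule: generate_topology_on.induct)
    case Empty then show ?case by simp
  next
    case (Int a b)
    show ?case
    proof
      fix C assume C: "C \<in> a \<inter> b"
      obtain U1 where "openin ?T U1 \<and> C \<subseteq> U1 \<and> ?B U1 \<subseteq> a"
        using Int.IH(1)[rule_format, of C] C by (elim exE IntE) auto
      moreover obtain U2 where "openin ?T U2 \<and> C \<subseteq> U2 \<and> ?B U2 \<subseteq> b"
        using Int.IH(2)[rule_format, of C] C by (elim exE IntE) auto
      ultimately show "\<exists>U. openin ?T U \<and> C \<subseteq> U \<and> ?B U \<subseteq> a \<inter> b"
        by (intro exI[of _ "U1 \<inter> U2"]) auto
    qed
  next
    case (UN K)
    show ?case
    proof
      fix C assume "C \<in> \<Union>K"
      then obtain k where k: "k \<in> K" "C \<in> k" by (rule UnionE)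
      obtain U where U: "openin ?T U \<and> C \<subseteq> U \<and> ?B U \<subseteq> k"
        using UN.IH[OF k(1), rule_format, OF k(2)] by (elim exE) auto
      have "?B U \<subseteq> \<Union>K" using U k(1) by (intro subset_trans[OF _ Union_upper]) auto
      then show "\<exists>U. openin ?T U \<and> C \<subseteq> U \<and> ?B U \<subseteq> \<Union>K"
        using U by (intro exI[of _ U]) simp
    qed
  next
    case (Basis s)
    then show ?case by blast
  qed
  show ?thesis unfolding goodZ_def
  proof (intro allI impI)
    fix W C assume a: "openin (hyper_top M d) W \<and> C \<in> W"
    have gW: "generate_topology_on ?S W" using a
      unfolding hyper_top_def openin_topology_generated_by_iff by (elim conjE)
    have "C \<in> W" using a by (elim conjE)
    obtain U where U: "openin ?T U" "C \<subseteq> U" "?B U \<subseteq> W"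
      using key[OF gW, rule_format, OF \<open>C \<in> W\<close>] by (elim exE conjE)
    have ts: "topspace (hyper_top M d) = \<Union>?S" unfolding hyper_top_def by simp
    have "C \<in> topspace (hyper_top M d)" using a openin_subset by blast
    then have "C \<in> \<Union>?S" using ts by simp
    then have "closedin ?T C \<and> C \<noteq> {}" by auto
    then have CB: "C \<in> ?B U" using U(2) by simp
    have "openin (hyper_top M d) (?B U)" unfolding hyper_top_def
      by (rule topology_generated_by_Basis) (use U in blast)
    moreover have "\<forall>D\<in>topspace (hyper_top M d). \<forall>E\<in>topspace (hyper_top M d).
         D \<union> E \<in> topspace (hyper_top M d) \<longrightarrow> (D \<union> E \<in> ?B U \<longleftrightarrow> D \<in> ?B U \<and> E \<in> ?B U)"
      unfolding ts by auto
    ultimately show "\<exists>V. openin (hyper_top M d) V \<and> C \<in> V \<and> V \<subseteq> W \<and>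
     (\<forall>D\<in>topspace (hyper_top M d). \<forall>E\<in>topspace (hyper_top M d). D \<union> E \<in> topspace (hyper_top M d) \<longrightarrow> (D \<union> E \<in> V \<longleftrightarrow> D \<in> V \<and> E \<in> V))"
      using CB U by (intro exI[of _ "?B U"]) auto
  qed
qed

theorem lemma4p2:
  fixes X :: "'a topology" and M :: "'b set" and d :: "'b \<Rightarrow> 'b \<Rightarrow> real"
    and A :: "'b set" and \<epsilon> :: real and Z :: "'b set topology"
    and f g :: "'a \<Rightarrow> 'b set"
  assumes "Metric_space M d"
    and "compact_space (Metric_space.mtopology M d)"
    and "finite A" and "A \<subseteq> M"
    and "\<epsilon> > 0"
    and "Z = Ueps_top M d \<epsilon> \<or> Z = Ufin_top d A \<epsilon>"
    and "continuous_map X Z f" and "continuous_map X Z g"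
    and "\<forall>x\<in>topspace X. f x \<union> g x \<in> topspace Z"
  shows "continuous_map X Z (\<lambda>x. f x \<union> g x)
    \<and> homotopic_with (\<lambda>_. True) X Z (\<lambda>x. f x \<union> g x) f
    \<and> homotopic_with (\<lambda>_. True) X Z (\<lambda>x. f x \<union> g x) g"
proof -
  have G: "goodZ Z" using assms(6) goodZ_Ufin goodZ_sub[OF goodZ_hyper] unfolding Ueps_top_def by blast
  have U: "\<forall>x\<in>topspace X. g x \<union> f x \<in> topspace Z" using assms(9) by (simp add: Un_commute)
  show ?thesis
    using goodZ_union_cont[OF G assms(7,8,9)] goodZ_homot[OF G assms(7,8,9)]
      goodZ_homot[OF G assms(8,7) U] by (simp add: Un_commute)
qed

end
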